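(* For every $\Delta \ge 1$ there is a local algorithm, using only a port numbering (no unique identifiers), that on every weakly $2$-coloured graph $\mathcal{G}=(V,E)$ without isolated nodes and of maximum degree at most $\Delta$ computes a spanning forest of $\mathcal{G}$ in which every component is a star with at least two nodes (i.e. a rooted tree of depth exactly $1$: a root with at least one child, all children being leaves), with each node knowing whether it is a root or a leaf and, for leaves, the port leading to its root.
   Context: Model: a graph $\mathcal{G}=(V,E)$ without isolated nodes is a distributed system; every node runs the same deterministic algorithm. Communication is synchronous: in each round every node receives messages from its neighbours, performs local computation, and sends messages to its neighbours. Each node knows its degree, its own input label (e.g. its colour), and the global degree bound $\Delta$. A local algorithm is one that terminates after $T$ rounds, where $T$ may depend on $\Delta$ but not on the number of nodes. A port numbering means each node has a fixed ordering (numbering $1,\dots,\deg(v)$) of its incident edges, known to it; nodes have no identifiers. A weak $2$-colouring assigns each node black or white so that every non-isolated node has at least one neighbour of the opposite colour; it is given as input. *)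

theory Defs
  imports Main
begin

definition nbrs :: "(nat \<Rightarrow> nat \<Rightarrow> bool) \<Rightarrow> nat \<Rightarrow> nat set" where
  "nbrs E v = {u. E v u}"

definition deg :: "(nat \<Rightarrow> nat \<Rightarrow> bool) \<Rightarrow> nat \<Rightarrow> nat" where
  "deg E v = card (nbrs E v)"

definition simple_graph :: "nat set \<Rightarrow> (nat \<Rightarrow> nat \<Rightarrow> bool) \<Rightarrow> bool" where
  "simple_graph V E \<longleftrightarrow> (\<forall>u v. E u v \<longrightarrow> u \<in> V \<and> v \<in> V \<and> E v u \<and> u \<noteq> v)"

definition no_isolated :: "nat set \<Rightarrow> (nat \<Rightarrow> nat \<Rightarrow> bool) \<Rightarrow> bool" where
  "no_isolated V E \<longleftrightarrow> (\<forall>v\<in>V. \<exists>u. E v u)"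

definition max_deg_le :: "nat set \<Rightarrow> (nat \<Rightarrow> nat \<Rightarrow> bool) \<Rightarrow> nat \<Rightarrow> bool" where
  "max_deg_le V E \<Delta> \<longleftrightarrow> (\<forall>v\<in>V. deg E v \<le> \<Delta>)"

definition port_numbering :: "nat set \<Rightarrow> (nat \<Rightarrow> nat \<Rightarrow> bool) \<Rightarrow> (nat \<Rightarrow> nat \<Rightarrow> nat) \<Rightarrow> bool" where
  "port_numbering V E p \<longleftrightarrow> (\<forall>v\<in>V. bij_betw (p v) {1..deg E v} (nbrs E v))"

definition inport :: "(nat \<Rightarrow> nat \<Rightarrow> bool) \<Rightarrow> (nat \<Rightarrow> nat \<Rightarrow> nat) \<Rightarrow> nat \<Rightarrow> nat \<Rightarrow> nat" where
  "inport E p u v = (THE j. j \<in> {1..deg E u} \<and> p u j = v)"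

text \<open>Weak 2-colouring (True = black, False = white).\<close>
definition weak_2_colouring :: "nat set \<Rightarrow> (nat \<Rightarrow> nat \<Rightarrow> bool) \<Rightarrow> (nat \<Rightarrow> bool) \<Rightarrow> bool" where
  "weak_2_colouring V E c \<longleftrightarrow> (\<forall>v\<in>V. \<exists>u. E v u \<and> c u \<noteq> c v)"

text \<open>Local output of a node: it is a root, or a leaf whose root is behind the given port.\<close>
datatype star_out = Root | Leaf nat

text \<open>A deterministic port-numbering algorithm (states and messages encoded as naturals).
  init: initial state from (degree, input colour);
  send: message sent from a state on a given port;
  step: new state from old state and received messages, indexed by port
        (None for non-existent ports);
  out: local output read off the final state.\<close>
record pn_alg =
  init :: "nat \<Rightarrow> bool \<Rightarrow> nat"
  send :: "nat \<Rightarrow> nat \<Rightarrow> nat"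
  step :: "nat \<Rightarrow> (nat \<Rightarrow> nat option) \<Rightarrow> nat"
  out :: "nat \<Rightarrow> star_out"

primrec run :: "pn_alg \<Rightarrow> (nat \<Rightarrow> nat \<Rightarrow> bool) \<Rightarrow> (nat \<Rightarrow> nat \<Rightarrow> nat) \<Rightarrow> (nat \<Rightarrow> bool)
    \<Rightarrow> nat \<Rightarrow> nat \<Rightarrow> nat" where
  "run A E p c 0 v = init A (deg E v) (c v)"
| "run A E p c (Suc t) v =
     step A (run A E p c t v)
       (\<lambda>i. if i \<in> {1..deg E v}
            then Some (send A (run A E p c t (p v i)) (inport E p (p v i) v))
            else None)"

definition star_forest_output :: "nat set \<Rightarrow> (nat \<Rightarrow> nat \<Rightarrow> bool) \<Rightarrow> (nat \<Rightarrow> nat \<Rightarrow> nat)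
    \<Rightarrow> (nat \<Rightarrow> star_out) \<Rightarrow> bool" where
  "star_forest_output V E p r \<longleftrightarrow>
     (\<forall>v\<in>V. case r v of
        Root \<Rightarrow> (\<exists>u\<in>V. \<exists>i. r u = Leaf i \<and> i \<in> {1..deg E u} \<and> p u i = v)
      | Leaf i \<Rightarrow> i \<in> {1..deg E v} \<and> r (p v i) = Root)"

end

theory Submission
  imports Defs "HOL-Library.Nat_Bijection"
begin

definition enc :: "nat list \<Rightarrow> nat" where "enc = list_encode"
definition dec :: "nat \<Rightarrow> nat list" where "dec = list_decode"
lemma dec_enc [simp]: "dec (enc xs) = xs" by (simp add: enc_def dec_def)

definition bn :: "bool \<Rightarrow> nat" where "bn b = (if b then 1 else 0)"

definition A0 :: pn_alg where
"A0 = \<lparr> init = (\<lambda>d col. enc [0, bn col, 0,0,0,0,0]),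
  send = (\<lambda>s j. let xs = dec s in
     if xs!0 = 0 then xs!1
     else if xs!0 = 1 then (if xs!1 = 0 \<and> j = xs!2 then 1 else 0)
     else if xs!0 = 2 then (if xs!1 = 1 \<and> xs!3 = 0 \<and> j = xs!2 then 1 else 0)
     else (if xs!1 = 0 \<and> j = xs!2 then (if xs!4 = 1 then 2 else 1) else 0)),
  step = (\<lambda>s m. let xs = dec s in
     if xs!0 = 0 then enc [1, xs!1, LEAST i. m i = Some (1 - xs!1), 0,0,0,0]
     else if xs!0 = 1 then enc [2, xs!1, xs!2, bn (\<exists>i. m i = Some 1), 0,0,0]
     else if xs!0 = 2 then enc [3, xs!1, xs!2, xs!3, bn (\<exists>i. m i = Some 1), 0,0]
     else enc [4, xs!1, xs!2, xs!3, xs!4, bn (\<exists>i. m i = Some 1), LEAST i. m i = Some 2]),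
  out = (\<lambda>s. let xs = dec s in
     if xs!1 = 0 then (if xs!4 = 1 then Root else Leaf (xs!2))
     else if xs!3 = 0 then Leaf (xs!2) else if xs!5 = 1 then Root else Leaf (xs!6)) \<rparr>"

definition msgs where "msgs A E p c t v = (\<lambda>i. if i \<in> {1..deg E v} then Some (send A (run A E p c t (p v i)) (inport E p (p v i) v)) else None)"

lemma run_Suc: "run A E p c (Suc t) v = step A (run A E p c t v) (msgs A E p c t v)"
  by (simp add: msgs_def)

locale G =
  fixes V E p c
  assumes sg: "simple_graph V E" and pn: "port_numbering V E p"
    and wc: "weak_2_colouring V E c"
begin

lemma nb: "v \<in> V \<Longrightarrow> E v u \<longleftrightarrow> (\<exists>i\<in>{1..deg E v}. p v i = u)"
proof -
  assume v: "v \<in> V"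
  have h: "p v ` {1..deg E v} = {u. E v u}" using pn v unfolding port_numbering_def bij_betw_def nbrs_def by blast
  have "E v u \<longleftrightarrow> u \<in> p v ` {1..deg E v}" using h by simp
  then show ?thesis by blast
qed

lemma pin: "v \<in> V \<Longrightarrow> i \<in> {1..deg E v} \<Longrightarrow> E v (p v i) \<and> p v i \<in> V"
proof -
  assume v: "v \<in> V" and i: "i \<in> {1..deg E v}"
  have "E v (p v i)" using nb[OF v] i by blast
  moreover then have "p v i \<in> V" using sg unfolding simple_graph_def by blast
  ultimately show ?thesis by blast
qed

lemma inport_iff:
  assumes v: "v \<in> V" and i: "i \<in> {1..deg E v}" and j: "j \<in> {1..deg E (p v i)}"
  shows "inport E p (p v i) v = j \<longleftrightarrow> p (p v i) j = v"
proof -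
  define u where "u = p v i"
  have u: "u \<in> V" "E u v" using pin[OF v i] sg unfolding u_def simple_graph_def by auto
  obtain j' where j': "j' \<in> {1..deg E u}" "p u j' = v" using nb[OF u(1)] u(2) by blast
  have inj: "inj_on (p u) {1..deg E u}" using pn u(1) unfolding port_numbering_def bij_betw_def by blast
  have inp: "inport E p u v = j'"
    unfolding inport_def
  proof (rule the_equality)
    show "j' \<in> {1..deg E u} \<and> p u j' = v" using j' by simp
  next
    fix k assume "k \<in> {1..deg E u} \<and> p u k = v"
    then show "k = j'" using j' inj inj_onD[of "p u" _ k j'] by metis
  qed
  have "p u j = v \<longleftrightarrow> j = j'"
  proof
    assume "p u j = v" then show "j = j'" using j j' inj inj_onD[of "p u" _ j j'] u_def by metis
  next
    assume "j = j'" then show "p u j = v" using j' by simp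
  qed
  then show ?thesis using inp u_def by auto
qed

definition fp where "fp v = (LEAST i. i \<in> {1..deg E v} \<and> c (p v i) \<noteq> c v)"
definition F where "F v = p v (fp v)"

lemma f_ok: assumes v: "v \<in> V" shows "fp v \<in> {1..deg E v} \<and> c (p v (fp v)) \<noteq> c v"
proof -
  have "\<exists>u. E v u \<and> c u \<noteq> c v" using wc v unfolding weak_2_colouring_def by simp
  then obtain u where u: "E v u" "c u \<noteq> c v" by blast
  from u(1) obtain i where i: "i \<in> {1..deg E v}" "p v i = u" using nb[OF v] by auto
  have "i \<in> {1..deg E v} \<and> c (p v i) \<noteq> c v" using i u(2) by simp
  then show ?thesis unfolding fp_def by (rule LeastI)
qed

lemma F_ok: assumes v: "v \<in> V" shows "E v (F v) \<and> F v \<in> V \<and> c (F v) \<noteq> c v"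
proof -
  have a: "fp v \<in> {1..deg E v}" "c (p v (fp v)) \<noteq> c v" using f_ok[OF v] by auto
  show ?thesis using pin[OF v a(1)] a(2) unfolding F_def by simp
qed

lemma inF: assumes v: "v \<in> V" and i: "i \<in> {1..deg E v}"
  shows "(inport E p (p v i) v = fp (p v i)) \<longleftrightarrow> F (p v i) = v"
proof -
  have u: "p v i \<in> V" using pin[OF v i] by simp
  have "fp (p v i) \<in> {1..deg E (p v i)}" using f_ok[OF u] by simp
  from inport_iff[OF v i this] show ?thesis unfolding F_def .
qed

definition chosen where "chosen v = (\<exists>i\<in>{1..deg E v}. \<not> c (p v i) \<and> F (p v i) = v)"
definition stolen where "stolen v = (\<exists>i\<in>{1..deg E v}. c (p v i) \<and> \<not> chosen (p v i) \<and> F (p v i) = v)"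
definition hasNS where "hasNS v = (\<exists>i\<in>{1..deg E v}. \<not> c (p v i) \<and> F (p v i) = v \<and> \<not> stolen (p v i))"
definition sp where "sp v = (LEAST i. i \<in> {1..deg E v} \<and> \<not> c (p v i) \<and> F (p v i) = v \<and> stolen (p v i))"

lemma ex_m: "(\<exists>i. (if i \<in> S then Some (bn (P i)) else None) = Some 1) \<longleftrightarrow> (\<exists>i\<in>S. P i)"
  by (auto simp: bn_def split: if_splits)

lemma least_m: "(LEAST i. (if i \<in> S then Some (g i) else None) = Some x) = (LEAST i. i \<in> S \<and> g i = x)"
  by (rule arg_cong[where f=Least]) auto

lemma bn_eq: "(bn a = 1 - bn b) = (a \<noteq> b)" by (simp add: bn_def)

lemma step0: "step A0 (enc [0,a,b,x,y,z,w]) m = enc [1, a, LEAST i. m i = Some (1 - a), 0,0,0,0]"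
  by (simp add: A0_def)
lemma step1: "step A0 (enc [1,a,b,x,y,z,w]) m = enc [2, a, b, bn (\<exists>i. m i = Some 1), 0,0,0]"
  by (simp add: A0_def)
lemma step2: "step A0 (enc [2,a,b,x,y,z,w]) m = enc [3, a, b, x, bn (\<exists>i. m i = Some 1), 0,0]"
  by (simp add: A0_def)
lemma step3: "step A0 (enc [3,a,b,x,y,z,w]) m = enc [4, a, b, x, y, bn (\<exists>i. m i = Some 1), LEAST i. m i = Some 2]"
  by (simp add: A0_def)
lemma send0: "send A0 (enc [0,a,b,x,y,z,w]) j = a"
  by (simp add: A0_def)
lemma send1: "send A0 (enc [1,a,b,x,y,z,w]) j = (if a = 0 \<and> j = b then 1 else 0)"
  by (simp add: A0_def)
lemma send2: "send A0 (enc [2,a,b,x,y,z,w]) j = (if a = 1 \<and> x = 0 \<and> j = b then 1 else 0)"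
  by (simp add: A0_def)
lemma send3: "send A0 (enc [3,a,b,x,y,z,w]) j = (if a = 0 \<and> j = b then (if y = 1 then 2 else 1) else 0)"
  by (simp add: A0_def)
lemma init0: "init A0 d col = enc [0, bn col, 0,0,0,0,0]"
  by (simp add: A0_def)

lemma r1: assumes v: "v \<in> V"
  shows "run A0 E p c (Suc 0) v = enc [1, bn (c v), fp v, 0,0,0,0]"
proof -
  have m: "msgs A0 E p c 0 v = (\<lambda>i. if i \<in> {1..deg E v} then Some (bn (c (p v i))) else None)"
    unfolding msgs_def by (rule ext) (simp only: run.simps(1) init0 send0)
  have l: "(LEAST i. (if i \<in> {1..deg E v} then Some (bn (c (p v i))) else None) = Some (1 - bn (c v))) = fp v"
    unfolding fp_def by (rule arg_cong[where f=Least]) (auto simp: bn_def)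
  show ?thesis
    by (simp only: run_Suc m run.simps(1) init0 step0 l)
qed

lemma r2: assumes v: "v \<in> V"
  shows "run A0 E p c (Suc (Suc 0)) v = enc [2, bn (c v), fp v, bn (chosen v),0,0,0]"
proof -
  have m: "msgs A0 E p c (Suc 0) v = (\<lambda>i. if i \<in> {1..deg E v} then Some (bn (\<not> c (p v i) \<and> F (p v i) = v)) else None)"
  proof (rule ext)
    fix i show "msgs A0 E p c (Suc 0) v i = (if i \<in> {1..deg E v} then Some (bn (\<not> c (p v i) \<and> F (p v i) = v)) else None)"
    proof (cases "i \<in> {1..deg E v}")
      case True
      have u: "p v i \<in> V" using pin[OF v True] by simp
      show ?thesis using True by (simp only: msgs_def r1[OF u] send1 inF[OF v True] if_True) (simp add: bn_def)
    next
      case False then show ?thesis by (simp only: msgs_def if_False)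
    qed
  qed
  have l: "(\<exists>i. (if i \<in> {1..deg E v} then Some (bn (\<not> c (p v i) \<and> F (p v i) = v)) else None) = Some 1) = chosen v"
    unfolding chosen_def by (auto simp: bn_def split: if_splits)
  show ?thesis
    by (simp only: run_Suc[of A0 E p c "Suc 0" v] m r1[OF v] step1 l)
qed

lemma r3: assumes v: "v \<in> V"
  shows "run A0 E p c (Suc (Suc (Suc 0))) v = enc [3, bn (c v), fp v, bn (chosen v), bn (stolen v),0,0]"
proof -
  have m: "msgs A0 E p c (Suc (Suc 0)) v = (\<lambda>i. if i \<in> {1..deg E v} then Some (bn (c (p v i) \<and> \<not> chosen (p v i) \<and> F (p v i) = v)) else None)"
  proof (rule ext)
    fix i show "msgs A0 E p c (Suc (Suc 0)) v i = (if i \<in> {1..deg E v} then Some (bn (c (p v i) \<and> \<not> chosen (p v i) \<and> F (p v i) = v)) else None)"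
    proof (cases "i \<in> {1..deg E v}")
      case True
      have u: "p v i \<in> V" using pin[OF v True] by simp
      show ?thesis using True by (simp only: msgs_def r2[OF u] send2 inF[OF v True] if_True) (simp add: bn_def)
    next
      case False then show ?thesis by (simp only: msgs_def if_False)
    qed
  qed
  have l: "(\<exists>i. (if i \<in> {1..deg E v} then Some (bn (c (p v i) \<and> \<not> chosen (p v i) \<and> F (p v i) = v)) else None) = Some 1) = stolen v"
    unfolding stolen_def by (auto simp: bn_def split: if_splits)
  show ?thesis
    by (simp only: run_Suc[of A0 E p c "Suc (Suc 0)" v] m r2[OF v] step2 l)
qed

lemma r4: assumes v: "v \<in> V"
  shows "run A0 E p c (Suc (Suc (Suc (Suc 0)))) v = enc [4, bn (c v), fp v, bn (chosen v), bn (stolen v), bn (hasNS v), sp v]"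
proof -
  define g where "g = (\<lambda>i. if i \<in> {1..deg E v} then
      Some (if \<not> c (p v i) \<and> F (p v i) = v then (if stolen (p v i) then 2 else 1) else 0::nat) else None)"
  have m: "msgs A0 E p c (Suc (Suc (Suc 0))) v = g"
  proof (rule ext)
    fix i show "msgs A0 E p c (Suc (Suc (Suc 0))) v i = g i"
    proof (cases "i \<in> {1..deg E v}")
      case True
      have u: "p v i \<in> V" using pin[OF v True] by simp
      show ?thesis using True unfolding g_def by (simp only: msgs_def r3[OF u] send3 inF[OF v True] if_True) (simp add: bn_def)
    next
      case False then show ?thesis by (simp only: msgs_def g_def if_False)
    qed
  qed
  have g1: "\<And>i. (g i = Some 1) = (i \<in> {1..deg E v} \<and> \<not> c (p v i) \<and> F (p v i) = v \<and> \<not> stolen (p v i))"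
    by (auto simp: g_def)
  have g2: "\<And>i. (g i = Some 2) = (i \<in> {1..deg E v} \<and> \<not> c (p v i) \<and> F (p v i) = v \<and> stolen (p v i))"
    by (auto simp: g_def)
  have e1: "(\<exists>i. g i = Some 1) = hasNS v" unfolding hasNS_def g1 by blast
  have e2: "(LEAST i. g i = Some 2) = sp v" unfolding sp_def g2 ..
  show ?thesis
    by (simp only: run_Suc[of A0 E p c "Suc (Suc (Suc 0))" v] m r3[OF v] step3 e1 e2)
qed

lemma out4: "out A0 (enc [4,a,b,x,y,z,w]) = (if a = 0 then (if y = 1 then Root else Leaf b)
     else if x = 0 then Leaf b else if z = 1 then Root else Leaf w)"
  by (simp add: A0_def)

lemma outv: assumes v: "v \<in> V"
  shows "out A0 (run A0 E p c (Suc (Suc (Suc (Suc 0)))) v) =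
    (if \<not> c v then (if stolen v then Root else Leaf (fp v))
     else if \<not> chosen v then Leaf (fp v) else if hasNS v then Root else Leaf (sp v))"
  by (simp only: r4[OF v] out4) (simp add: bn_def)

lemma Esym: "E u v \<Longrightarrow> E v u" using sg unfolding simple_graph_def by blast

lemma final: "star_forest_output V E p (\<lambda>v. out A0 (run A0 E p c (Suc (Suc (Suc (Suc 0)))) v))"
  unfolding star_forest_output_def
proof
  fix v assume v: "v \<in> V"
  let ?r = "\<lambda>v. out A0 (run A0 E p c (Suc (Suc (Suc (Suc 0)))) v)"
  have fv: "fp v \<in> {1..deg E v}" "c (F v) \<noteq> c v" "F v \<in> V" "E v (F v)"
    using f_ok[OF v] F_ok[OF v] by auto
  have RT: "?r v = Root \<Longrightarrow> (\<exists>u\<in>V. \<exists>i. ?r u = Leaf i \<and> i \<in> {1..deg E u} \<and> p u i = v) \<Longrightarrow>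
      (case ?r v of Root \<Rightarrow> \<exists>u\<in>V. \<exists>i. ?r u = Leaf i \<and> i \<in> {1..deg E u} \<and> p u i = v
      | Leaf i \<Rightarrow> i \<in> {1..deg E v} \<and> ?r (p v i) = Root)"
    by (simp only: star_out.case)
  have LF: "\<And>k. ?r v = Leaf k \<Longrightarrow> k \<in> {1..deg E v} \<Longrightarrow> ?r (p v k) = Root \<Longrightarrow>
      (case ?r v of Root \<Rightarrow> \<exists>u\<in>V. \<exists>i. ?r u = Leaf i \<and> i \<in> {1..deg E u} \<and> p u i = v
      | Leaf i \<Rightarrow> i \<in> {1..deg E v} \<and> ?r (p v i) = Root)"
    by (simp only: star_out.case)
  show "case ?r v of Root \<Rightarrow> \<exists>u\<in>V. \<exists>i. ?r u = Leaf i \<and> i \<in> {1..deg E u} \<and> p u i = v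
      | Leaf i \<Rightarrow> i \<in> {1..deg E v} \<and> ?r (p v i) = Root"
  proof (cases "c v")
    case False
    note cv = False
    show ?thesis
    proof (cases "stolen v")
      case True
      then obtain i where i: "i \<in> {1..deg E v}" "c (p v i)" "\<not> chosen (p v i)" "F (p v i) = v"
        unfolding stolen_def by blast
      define b where "b = p v i"
      have b: "b \<in> V" using pin[OF v i(1)] b_def by simp
      have rb: "?r b = Leaf (fp b)" using outv[OF b] i b_def by simp
      have fb: "fp b \<in> {1..deg E b}" "p b (fp b) = v" using f_ok[OF b] i b_def by (auto simp: F_def)
      have rv: "?r v = Root" using outv[OF v] cv True by simp
      show ?thesis
        by (rule RT[OF rv]) (use b rb fb in blast)
    next
      case False
      define b where "b = F v"
      have b: "b \<in> V" "c b" using fv cv b_def by auto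
      obtain j where j: "j \<in> {1..deg E b}" "p b j = v" using nb[OF b(1)] Esym fv(4) b_def by blast
      have ch: "chosen b" unfolding chosen_def using j cv b_def by (intro bexI[of _ j]) auto
      have ns: "hasNS b" unfolding hasNS_def using j cv b_def False by (intro bexI[of _ j]) auto
      have rb: "?r b = Root" using outv[OF b(1)] b ch ns by simp
      have rv: "?r v = Leaf (fp v)" using outv[OF v] cv False by simp
      have rb': "?r (p v (fp v)) = Root" using rb b_def by (simp add: F_def)
      show ?thesis by (rule LF[OF rv fv(1) rb'])
    qed
  next
    case True
    note cv = True
    show ?thesis
    proof (cases "chosen v")
      case False
      define w where "w = F v"
      have w: "w \<in> V" "\<not> c w" using fv cv w_def by auto
      obtain j where j: "j \<in> {1..deg E w}" "p w j = v" using nb[OF w(1)] Esym fv(4) w_def by blast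
      have st: "stolen w" unfolding stolen_def using j cv False w_def by (intro bexI[of _ j]) auto
      have rw: "?r w = Root" using outv[OF w(1)] w st by simp
      have rv: "?r v = Leaf (fp v)" using outv[OF v] cv False by simp
      have rw': "?r (p v (fp v)) = Root" using rw w_def by (simp add: F_def)
      show ?thesis by (rule LF[OF rv fv(1) rw'])
    next
      case True
      note ch = True
      show ?thesis
      proof (cases "hasNS v")
        case True
        then obtain i where i: "i \<in> {1..deg E v}" "\<not> c (p v i)" "F (p v i) = v" "\<not> stolen (p v i)"
          unfolding hasNS_def by blast
        define w where "w = p v i"
        have w: "w \<in> V" using pin[OF v i(1)] w_def by simp
        have rw: "?r w = Leaf (fp w)" using outv[OF w] i w_def by simp
        have fw: "fp w \<in> {1..deg E w}" "p w (fp w) = v" using f_ok[OF w] i w_def by (auto simp: F_def)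
        have rv: "?r v = Root" using outv[OF v] cv ch True by simp
        show ?thesis
          by (rule RT[OF rv]) (use w rw fw in blast)
      next
        case False
        obtain i where i: "i \<in> {1..deg E v}" "\<not> c (p v i)" "F (p v i) = v"
          using ch unfolding chosen_def by blast
        then have "stolen (p v i)" using False unfolding hasNS_def by blast
        then have ex: "\<exists>i. i \<in> {1..deg E v} \<and> \<not> c (p v i) \<and> F (p v i) = v \<and> stolen (p v i)"
          using i by blast
        have s: "sp v \<in> {1..deg E v} \<and> \<not> c (p v (sp v)) \<and> F (p v (sp v)) = v \<and> stolen (p v (sp v))"
          unfolding sp_def using ex by (rule LeastI_ex)
        define w where "w = p v (sp v)"
        have w: "w \<in> V" using pin[OF v] s w_def by simp
        have rw: "?r w = Root" using outv[OF w] s w_def by simp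
        have rv: "?r v = Leaf (sp v)" using outv[OF v] cv ch False by simp
        show ?thesis using rw w_def s by (intro LF[OF rv]) auto
      qed
    qed
  qed
qed

end

theorem mainTheorem4:
  shows "\<forall>\<Delta>::nat. \<Delta> \<ge> 1 \<longrightarrow>
    (\<exists>(A::pn_alg) (T::nat). \<forall>V E p c.
       finite V \<and> simple_graph V E \<and> port_numbering V E p \<and> no_isolated V E \<and>
       max_deg_le V E \<Delta> \<and> weak_2_colouring V E c \<longrightarrow>
       star_forest_output V E p (\<lambda>v. out A (run A E p c T v)))"
proof (intro allI impI)
  fix \<Delta> :: nat
  show "\<exists>(A::pn_alg) (T::nat). \<forall>V E p c.
       finite V \<and> simple_graph V E \<and> port_numbering V E p \<and> no_isolated V E \<and>
       max_deg_le V E \<Delta> \<and> weak_2_colouring V E c \<longrightarrow>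
       star_forest_output V E p (\<lambda>v. out A (run A E p c T v))"
  proof (rule exI[of _ A0], rule exI[of _ "Suc (Suc (Suc (Suc 0)))"], intro allI impI)
    fix V E p c
    assume h: "finite V \<and> simple_graph V E \<and> port_numbering V E p \<and> no_isolated V E \<and>
       max_deg_le V E \<Delta> \<and> weak_2_colouring V E c"
    interpret G V E p c using h by unfold_locales auto
    show "star_forest_output V E p (\<lambda>v. out A0 (run A0 E p c (Suc (Suc (Suc (Suc 0)))) v))"
      by (rule final)
  qed
qed

end
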